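(* In the setting below, if $C$ is Euclidean LCD, then $g(x)$ is self-reciprocal.
   Context: Let $q$ be a prime power, $F=\mathbb{F}_q$, $m\ge1$ with $\gcd(q,m)=1$, and $R=F[x]/\langle x^m-1\rangle$; elements of $R$ are represented by polynomials of degree $<m$ and identified with their coefficient vectors in $F^m$. A quasi-cyclic code of length $2m$ and index $2$ is an $R$-submodule $C\subseteq R^2$. The Euclidean inner product of $(a_1,a_2),(b_1,b_2)\in R^2$ is the sum of the standard dot products of the coefficient vectors of $a_1,b_1$ and of $a_2,b_2$; $C$ is Euclidean LCD if $C\cap C^{\perp_e}=\{0\}$. For a nonzero polynomial $f$ of degree $k$, $f^*(x)=x^kf(x^{-1})$; $f$ is self-reciprocal if $f^*=\alpha f$ for some $\alpha\in F$. Suppose $C$ is generated as an $R$-module by $(g_{11}(x),g_{12}(x))$ and $(0,g_{22}(x))$, where $g_{11},g_{12},g_{22}\in F[x]$ satisfy: $g_{11}\mid x^m-1$, $g_{22}\mid x^m-1$, $\deg g_{12}<\deg g_{22}$, and $g_{11}g_{22}\mid (x^m-1)g_{12}$. Let $g=\gcd(g_{11},g_{22})$. *)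

theory Defs
  imports "HOL-Computational_Algebra.Polynomial" "HOL-Computational_Algebra.Polynomial_Factorial" "HOL-Library.Cardinality"
begin

definition xm1 :: "nat \<Rightarrow> 'a::field poly" where
  "xm1 m = monom 1 m - 1"

text \<open>R^2, elements of R = F[x]/(x^m-1) represented by polynomials of degree < m.\<close>
definition R2 :: "nat \<Rightarrow> ('a::field poly \<times> 'a poly) set" where
  "R2 m = {(a, b). degree a < m \<and> degree b < m}"

definition qc_code :: "nat \<Rightarrow> 'a::field poly \<Rightarrow> 'a poly \<Rightarrow> 'a poly \<Rightarrow> ('a poly \<times> 'a poly) set" where
  "qc_code m g11 g12 g22 =
     {((r1 * g11) mod xm1 m, (r1 * g12 + r2 * g22) mod xm1 m) | r1 r2. True}"

definition euclid_ip :: "nat \<Rightarrow> ('a::field poly \<times> 'a poly) \<Rightarrow> ('a poly \<times> 'a poly) \<Rightarrow> 'a" where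
  "euclid_ip m u v =
     (\<Sum>i<m. coeff (fst u) i * coeff (fst v) i) + (\<Sum>i<m. coeff (snd u) i * coeff (snd v) i)"

definition euclid_dual :: "nat \<Rightarrow> ('a::field poly \<times> 'a poly) set \<Rightarrow> ('a poly \<times> 'a poly) set" where
  "euclid_dual m C = {v \<in> R2 m. \<forall>c\<in>C. euclid_ip m c v = 0}"

definition euclid_LCD :: "nat \<Rightarrow> ('a::field poly \<times> 'a poly) set \<Rightarrow> bool" where
  "euclid_LCD m C \<longleftrightarrow> C \<inter> euclid_dual m C = {(0, 0)}"

text \<open>f^*(x) = x^(deg f) f(1/x) is the library's reflect_poly.\<close>
definition self_reciprocal :: "'a::field poly \<Rightarrow> bool" where
  "self_reciprocal f \<longleftrightarrow> f \<noteq> 0 \<and> (\<exists>\<alpha>. reflect_poly f = smult \<alpha> f)"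

end

theory Submission
  imports Defs
begin

lemma card_zero: "(of_nat CARD('a::{ring_1,finite}) :: 'a) = 0"
proof -
  have "(\<Sum>x\<in>UNIV. x + 1) = (\<Sum>x\<in>UNIV. (x::'a))"
    by (rule sum.reindex_bij_witness[of _ "\<lambda>x. x - 1" "\<lambda>x. x + 1"]) auto
  hence "(\<Sum>x\<in>UNIV. (x::'a)) + of_nat CARD('a) = (\<Sum>x\<in>UNIV. x)"
    by (simp add: sum.distrib)
  thus ?thesis by simp
qed

lemma ofnat_m_nz:
  assumes "coprime (CARD('a::{field,finite})) m"
  shows "(of_nat m :: 'a) \<noteq> 0"
proof
  assume "(of_nat m :: 'a) = 0"
  hence "CHAR('a) dvd m" by (simp add: of_nat_eq_0_iff_char_dvd)
  moreover have "CHAR('a) dvd CARD('a)" using card_zero[where ?'a='a] by (simp only: of_nat_eq_0_iff_char_dvd)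
  ultimately have "CHAR('a) dvd 1" using assms by (metis coprime_common_divisor_nat nat_dvd_1_iff_1)
  thus False by simp
qed

lemma sqf:
  fixes d :: "'a::field poly"
  assumes "m \<ge> 1" "(of_nat m :: 'a) \<noteq> 0" "d * d dvd xm1 m"
  shows "is_unit d"
proof -
  define h where "h = (xm1 m :: 'a poly)"
  obtain k where hk: "h = d * d * k" using assms(3) h_def by (auto elim: dvdE)
  have "pderiv h = d * (d * pderiv k + k * pderiv d + k * pderiv d)"
    unfolding hk by (simp add: pderiv_mult algebra_simps)
  hence d1: "d dvd pderiv h" by simp
  have ph: "pderiv h = monom (of_nat m) (m - 1)"
    by (simp add: h_def xm1_def pderiv_diff pderiv_monom)
  have "[:of_nat m:] = monom 1 1 * monom (of_nat m) (m - 1) - smult (of_nat m) h"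
    using assms(1) by (simp add: h_def xm1_def mult_monom smult_monom smult_diff_right monom_0)
  moreover have "d dvd monom 1 1 * monom (of_nat m) (m - 1) - smult (of_nat m) h"
    using d1 ph hk by (metis dvd_diff dvd_mult dvd_smult dvd_triv_left mult.assoc)
  ultimately have "d dvd [:of_nat m:]" by simp
  moreover have "is_unit ([:of_nat m:] :: 'a poly)" using assms(2) by (rule is_unit_triv)
  ultimately show ?thesis using dvd_unit_imp_unit by blast
qed

definition rv :: "nat \<Rightarrow> 'a::field poly \<Rightarrow> 'a poly" where
  "rv K p = monom 1 (K - degree p) * reflect_poly p"

lemma coeff_rv:
  assumes "degree p \<le> K"
  shows "coeff (rv K p) j = (if j \<le> K then coeff p (K - j) else 0)"
  using assms
  by (auto simp: rv_def coeff_monom_mult coeff_reflect_poly coeff_eq_0)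

lemma degree_rv: "degree p \<le> K \<Longrightarrow> degree (rv K p) \<le> K"
  by (rule degree_le) (auto simp: coeff_rv)

lemma rv_add: "degree p \<le> K \<Longrightarrow> degree q \<le> K \<Longrightarrow> rv K (p + q) = rv K p + rv K q"
  by (rule poly_eqI) (simp add: coeff_rv degree_add_le)

lemma rv_diff: "degree p \<le> K \<Longrightarrow> degree q \<le> K \<Longrightarrow> rv K (p - q) = rv K p - rv K q"
  by (rule poly_eqI) (simp add: coeff_rv degree_diff_le)

lemma rv_0[simp]: "rv K 0 = 0" by (simp add: rv_def)

lemma rv_mult:
  assumes "degree p \<le> K" "degree q \<le> L"
  shows "rv (K + L) (p * q) = rv K p * rv L q"
proof (cases "p = 0 \<or> q = 0")
  case True thus ?thesis by auto
next
  case False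
  hence d: "degree (p * q) = degree p + degree q" by (simp add: degree_mult_eq)
  have "K + L - degree (p * q) = (K - degree p) + (L - degree q)" using d assms by simp
  hence "monom (1::'a) (K + L - degree (p * q)) = monom 1 (K - degree p) * monom 1 (L - degree q)"
    by (simp add: mult_monom)
  thus ?thesis unfolding rv_def by (simp add: reflect_poly_mult algebra_simps)
qed

lemma rv_shift: "degree p \<le> K \<Longrightarrow> rv (n + K) p = monom 1 n * rv K p"
proof -
  assume a: "degree p \<le> K"
  hence "monom (1::'a) (n + K - degree p) = monom 1 n * monom 1 (K - degree p)"
    by (simp add: mult_monom)
  thus ?thesis unfolding rv_def by (simp add: mult.assoc)
qed

lemma rv_self: "rv (degree g) g = reflect_poly g"
  by (simp add: rv_def monom_0)

lemma coeff_xm1: "coeff (xm1 m :: 'a::field poly) k = (if k = m then 1 else 0) - (if k = 0 then 1 else 0)"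
  by (simp add: xm1_def coeff_monom)

lemma degree_xm1: "m \<ge> 1 \<Longrightarrow> degree (xm1 m :: 'a::field poly) = m"
  by (rule antisym, rule degree_le) (auto simp: coeff_xm1 intro!: le_degree)

lemma rv_xm1: "m \<ge> 1 \<Longrightarrow> rv m (xm1 m :: 'a::field poly) = - xm1 m"
  by (rule poly_eqI) (auto simp: coeff_rv degree_xm1 coeff_xm1)

definition Sg :: "nat \<Rightarrow> 'a::field poly \<Rightarrow> 'a" where
  "Sg m p = (\<Sum>j\<le>degree p. coeff p (j*m + (m-1)))"

lemma Sn_eq:
  assumes "m \<ge> 1" "degree p < N"
  shows "(\<Sum>j<N. coeff p (j*m + (m-1))) = Sg m p"
  unfolding Sg_def
proof (rule sum.mono_neutral_right)
  show "\<forall>i\<in>{..<N} - {..degree p}. coeff p (i * m + (m - 1)) = 0"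
  proof
    fix i assume "i \<in> {..<N} - {..degree p}"
    hence "i > degree p" by auto
    moreover have "i * m \<ge> i" using assms(1) by simp
    ultimately show "coeff p (i * m + (m - 1)) = 0" by (intro coeff_eq_0) linarith
  qed
qed (use assms in auto)

lemma Sg_add:
  fixes p q :: "'a::field poly" assumes m: "m \<ge> 1" shows "Sg m (p + q) = Sg m p + Sg m q"
proof -
  define N where "N = degree p + degree q + 1"
  have d1: "degree p < N" and d2: "degree q < N" by (auto simp: N_def)
  have d3: "degree (p + q) < N" using degree_add_le_max[of p q] by (auto simp: N_def)
  have "Sg m (p+q) = (\<Sum>j<N. coeff (p+q) (j*m + (m-1)))"
    by (rule Sn_eq[symmetric, OF m d3])
  also have "\<dots> = (\<Sum>j<N. coeff p (j*m + (m-1))) + (\<Sum>j<N. coeff q (j*m + (m-1)))"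
    by (simp add: sum.distrib)
  also have "\<dots> = Sg m p + Sg m q" by (simp only: Sn_eq[OF m d1] Sn_eq[OF m d2])
  finally show ?thesis .
qed

lemma Sg_minus: "m \<ge> 1 \<Longrightarrow> Sg m (- p) = - Sg m p"
  by (simp add: Sg_def sum_negf)

lemma Sg_diff:
  fixes p q :: "'a::field poly" shows "m \<ge> 1 \<Longrightarrow> Sg m (p - q) = Sg m p - Sg m q"
  using Sg_add[of m p "-q"] Sg_minus[of m q] by simp

lemma Sn_xm1:
  assumes "m \<ge> 1"
  shows "(\<Sum>j<N. coeff (xm1 m * q) (j*m + (m-1))) = (if N = 0 then 0 else - coeff q (N*m - 1))"
proof (induction N)
  case 0 thus ?case by simp
next
  case (Suc N)
  have c: "coeff (xm1 m * q) k = (if k < m then 0 else coeff q (k - m)) - coeff q k" for k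
    by (simp add: xm1_def left_diff_distrib coeff_monom_mult)
  show ?case
  proof (cases "N = 0")
    case True thus ?thesis using assms by (simp add: c)
  next
    case False
    have "N*m + (m-1) - m = N*m - 1" using assms False by (cases N) auto
    moreover have "N*m + (m-1) = Suc N * m - 1" using assms by simp
    moreover have "\<not> (N*m + (m-1) < m)" using False by (cases N) auto
    ultimately show ?thesis using Suc False assms by (simp add: c)
  qed
qed

lemma Sg_xm1:
  fixes q :: "'a::field poly" assumes m: "m \<ge> 1" shows "Sg m (xm1 m * q) = 0"
proof (cases "q = 0")
  case False
  define N where "N = degree (xm1 m * q) + 1"
  have dq: "degree (xm1 m * q) = m + degree q"
  proof -
    have "xm1 m \<noteq> (0::'a poly)" using degree_xm1[OF m, where 'a='a] m by force
    thus ?thesis using False m by (simp add: degree_mult_eq degree_xm1)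
  qed
  have "Sg m (xm1 m * q) = (\<Sum>j<N. coeff (xm1 m * q) (j*m + (m-1)))"
    by (rule Sn_eq[symmetric]) (use m in \<open>auto simp: N_def\<close>)
  also have "\<dots> = - coeff q (N*m - 1)" by (simp only: Sn_xm1[OF m]) (simp add: N_def)
  also have "N * m \<ge> N" using m by simp
  hence "coeff q (N*m - 1) = 0" using dq m by (intro coeff_eq_0) (simp add: N_def)
  finally show ?thesis by simp
qed (simp add: Sg_def)

lemma Sg_shift: 
  assumes m: "m \<ge> 1" shows "Sg m (monom 1 m * p) = Sg m p"
proof -
  define N where "N = degree p + m + 1"
  have d1: "degree (monom (1::'a) m * p) < Suc N"
    using degree_mult_le[of "monom 1 m" p] by (simp add: N_def degree_monom_eq)
  have d2: "degree p < N" by (simp add: N_def)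
  have "Sg m (monom 1 m * p) = (\<Sum>j<Suc N. coeff (monom 1 m * p) (j*m + (m-1)))"
    by (rule Sn_eq[symmetric, OF m d1])
  also have "\<dots> = coeff (monom 1 m * p) (0*m + (m-1)) + (\<Sum>j<N. coeff (monom 1 m * p) (Suc j*m + (m-1)))"
    by (rule sum.lessThan_Suc_shift)
  also have "\<dots> = (\<Sum>j<N. coeff p (j*m + (m-1)))"
  proof -
    have "coeff (monom 1 m * p) (Suc j*m + (m-1)) = coeff p (j*m + (m-1))" for j
    proof -
      have "Suc j*m + (m-1) - m = j*m + (m-1)" by simp
      thus ?thesis by (simp only: coeff_monom_mult) simp
    qed
    thus ?thesis using m by (simp add: coeff_monom_mult del: mult_Suc)
  qed
  also have "\<dots> = Sg m p" by (rule Sn_eq[OF m d2])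
  finally show ?thesis .
qed

lemma Sg_shiftL: "m \<ge> 1 \<Longrightarrow> Sg m (monom 1 (L*m) * p) = Sg m p"
proof (induction L)
  case (Suc L)
  have "monom (1::'a) (Suc L * m) = monom 1 m * monom 1 (L*m)"
    by (simp add: mult_monom)
  hence e: "monom 1 (Suc L * m) * p = monom 1 m * (monom 1 (L*m) * p)"
    by (simp add: mult.assoc)
  show ?case unfolding e using Suc by (simp add: Sg_shift)
qed (simp add: monom_0)

lemma Sg_low:
  assumes "m \<ge> 1" "degree p < 2*m - 1"
  shows "Sg m p = coeff p (m - 1)"
proof -
  have "Sg m p = (\<Sum>j<Suc (degree p). coeff p (j*m + (m-1)))"
    using assms by (subst Sn_eq) auto
  also have "\<dots> = coeff p (0*m + (m-1)) + (\<Sum>j<degree p. coeff p (Suc j*m + (m-1)))"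
    by (rule sum.lessThan_Suc_shift)
  also have "(\<Sum>j<degree p. coeff p (Suc j*m + (m-1))) = 0"
    using assms by (intro sum.neutral ballI coeff_eq_0) (auto simp: algebra_simps)
  finally show ?thesis by simp
qed

definition Bf :: "nat \<Rightarrow> 'a::field poly \<Rightarrow> 'a poly \<Rightarrow> 'a" where
  "Bf m a b = (\<Sum>i<m. coeff a i * coeff b i)"

lemma degree_mod_xm1: "m \<ge> 1 \<Longrightarrow> degree (p mod xm1 m :: 'a::field poly) < m"
proof -
  assume m: "m \<ge> 1"
  have nz: "xm1 m \<noteq> (0::'a poly)" using degree_xm1[OF m, where 'a='a] m by force
  show ?thesis
  proof (cases "p mod xm1 m = 0")
    case True thus ?thesis using m by simp
  next
    case False thus ?thesis using degree_mod_less'[OF nz False] degree_xm1[OF m, where 'a='a] by simp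
  qed
qed

lemma Bf_eq:
  assumes m: "m \<ge> 1" and da: "degree a < m" and db: "degree b < m"
  shows "Bf m a b = Sg m (a * rv (m-1) b)"
proof -
  have db': "degree b \<le> m - 1" using db by simp
  have "degree (a * rv (m-1) b) \<le> degree a + degree (rv (m-1) b)" by (rule degree_mult_le)
  also have "\<dots> \<le> (m-1) + (m-1)" using da degree_rv[OF db'] by simp
  finally have "degree (a * rv (m-1) b) < 2*m - 1" using m by simp
  hence "Sg m (a * rv (m-1) b) = coeff (a * rv (m-1) b) (m-1)" by (rule Sg_low[OF m])
  also have "\<dots> = (\<Sum>i\<le>m-1. coeff a i * coeff (rv (m-1) b) (m - 1 - i))" by (simp add: coeff_mult)
  also have "\<dots> = (\<Sum>i\<le>m-1. coeff a i * coeff b i)"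
  proof (rule sum.cong)
    fix i assume "i \<in> {..m-1}"
    hence i: "i \<le> m - 1" by simp
    hence "m - 1 - (m - 1 - i) = i" by simp
    thus "coeff a i * coeff (rv (m-1) b) (m - 1 - i) = coeff a i * coeff b i"
      using i by (simp only: coeff_rv[OF db']) simp
  qed simp
  also have "{..m-1} = {..<m}" using m by auto
  finally show ?thesis by (simp add: Bf_def)
qed

lemma orth:
  fixes u s w g :: "'a::field poly"
  assumes m: "m \<ge> 1" and hu: "xm1 m = u * reflect_poly g" and gw: "g dvd w"
  shows "Bf m ((u*s) mod xm1 m) (w mod xm1 m) = 0"
proof -
  define h where "h = (xm1 m :: 'a poly)"
  define a where "a = u * s"
  define a' where "a' = a mod h"
  define b' where "b' = w mod h"
  define ta where "ta = a div h"
  define tb where "tb = w div h"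
  have hnz: "h \<noteq> 0" using degree_xm1[OF m, where 'a='a] m by (force simp: h_def)
  have dh: "degree h = m" using degree_xm1[OF m] by (simp add: h_def)
  have da': "degree a' < m" unfolding a'_def h_def by (rule degree_mod_xm1[OF m])
  have db': "degree b' < m" unfolding b'_def h_def by (rule degree_mod_xm1[OF m])
  have aeq: "a' = a - h * ta"
  proof -
    have "a div h * h + a mod h = a" by (rule div_mult_mod_eq)
    thus ?thesis unfolding a'_def ta_def by (simp add: algebra_simps eq_diff_eq)
  qed
  have weq: "w = h * tb + b'" unfolding b'_def tb_def by (simp add: mult.commute)
  define L where "L = degree w + 1"
  define K where "K = L * m + (m - 1)"
  have LmL: "L * m \<ge> L" using m by simp
  have dwK: "degree w \<le> K" using LmL by (simp add: K_def L_def)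
  have mK: "m \<le> K" using m by (simp add: K_def L_def)
  have db'K: "degree b' \<le> K" using db' mK by simp
  have dhtb: "degree (h * tb) \<le> K"
  proof -
    have "h * tb = w - b'" using weq by simp
    thus ?thesis using degree_diff_le[OF dwK db'K] by simp
  qed
  have S1: "Bf m a' b' = Sg m (a' * rv K b')"
  proof -
    have "rv K b' = monom 1 (L*m) * rv (m-1) b'" unfolding K_def
      by (rule rv_shift) (use db' in simp)
    hence "a' * rv K b' = monom 1 (L*m) * (a' * rv (m-1) b')" by (simp add: algebra_simps)
    hence "Sg m (a' * rv K b') = Sg m (a' * rv (m-1) b')" using Sg_shiftL[OF m] by metis
    thus ?thesis using Bf_eq[OF m da' db'] by simp
  qed
  have rvh: "rv K (h * tb) = - h * rv (K - m) tb"
  proof (cases "tb = 0")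
    case True thus ?thesis by simp
  next
    case False
    hence "degree (h * tb) = m + degree tb" using hnz dh by (simp add: degree_mult_eq)
    hence dtb: "degree tb \<le> K - m" using dhtb by simp
    have "rv (m + (K - m)) (h * tb) = rv m h * rv (K - m) tb"
      by (rule rv_mult) (use dh dtb in auto)
    moreover have "m + (K - m) = K" using mK by simp
    ultimately show ?thesis using rv_xm1[OF m, where 'a='a] by (simp add: h_def)
  qed
  have "rv K w = rv K (h * tb) + rv K b'" using rv_add[OF dhtb db'K] weq by simp
  hence "rv K b' = rv K w + h * rv (K - m) tb" using rvh by simp
  hence "a' * rv K b' = a' * rv K w + h * (a' * rv (K - m) tb)" by (simp add: algebra_simps)
  hence S2: "Sg m (a' * rv K b') = Sg m (a' * rv K w)"
    using Sg_add[OF m, where 'a='a] Sg_xm1[OF m, where 'a='a] by (simp add: h_def)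
  have "a' * rv K w = a * rv K w - h * (ta * rv K w)" unfolding aeq by (simp add: algebra_simps)
  hence S3: "Sg m (a' * rv K w) = Sg m (a * rv K w)"
    using Sg_diff[OF m, where 'a='a] Sg_xm1[OF m, where 'a='a] by (simp add: h_def)
  have S4: "Sg m (a * rv K w) = 0"
  proof (cases "w = 0")
    case True thus ?thesis by (simp add: Sg_def)
  next
    case False
    obtain k where wk: "w = g * k" using gw by (auto elim: dvdE)
    hence "g \<noteq> 0" "k \<noteq> 0" using False by auto
    hence "degree w = degree g + degree k" using wk by (simp add: degree_mult_eq)
    hence dg: "degree g \<le> degree g" and dk: "degree k \<le> K - degree g" using dwK by auto
    have "rv (degree g + (K - degree g)) (g * k) = rv (degree g) g * rv (K - degree g) k"
      by (rule rv_mult[OF dg dk])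
    moreover have "degree g + (K - degree g) = K" using \<open>degree w = _\<close> dwK by simp
    ultimately have "rv K w = reflect_poly g * rv (K - degree g) k" using wk rv_self[of g] by simp
    hence "a * rv K w = h * (s * rv (K - degree g) k)"
      by (simp add: a_def h_def hu algebra_simps)
    thus ?thesis using Sg_xm1[OF m, where 'a='a] by (simp add: h_def)
  qed
  show ?thesis using S1 S2 S3 S4 by (simp add: a'_def b'_def a_def h_def)
qed

lemma Bf_comm: "Bf m a b = Bf m b a" by (simp add: Bf_def mult.commute)

theorem lemma3p2:
  fixes g11 g12 g22 :: "'a::{field_gcd,finite} poly" and m :: nat
  assumes "m \<ge> 1"
    and "coprime (CARD('a)) m"
    and "g11 dvd xm1 m"
    and "g22 dvd xm1 m"
    and "g12 = 0 \<or> degree g12 < degree g22"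
    and "g11 * g22 dvd xm1 m * g12"
    and "euclid_LCD m (qc_code m g11 g12 g22)"
  shows "self_reciprocal (gcd g11 g22)"
proof -
  note m = assms(1)
  define h where "h = (xm1 m :: 'a poly)"
  define g where "g = gcd g11 g22"
  have hnz: "h \<noteq> 0" using degree_xm1[OF m, where 'a='a] m by (force simp: h_def)
  have dh: "degree h = m" using degree_xm1[OF m] by (simp add: h_def)
  have nzm: "(of_nat m :: 'a) \<noteq> 0" by (rule ofnat_m_nz[OF assms(2)])
  have g11nz: "g11 \<noteq> 0" using assms(3) hnz by (auto simp: h_def)
  have gnz: "g \<noteq> 0" using g11nz by (simp add: g_def)
  have gh: "g dvd h" using assms(3) unfolding g_def h_def by (meson dvd_trans gcd_dvd1)
  then obtain e where he: "h = g * e" by (auto elim: dvdE)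
  have cop: "coprime g e"
  proof (rule coprimeI)
    fix d assume "d dvd g" "d dvd e"
    hence "d * d dvd g * e" by (rule mult_dvd_mono)
    thus "is_unit d" using sqf[OF m nzm] he by (simp add: h_def)
  qed
  have g12: "g dvd g12"
  proof -
    have "g * g dvd g11 * g22" by (rule mult_dvd_mono) (simp_all add: g_def)
    also have "\<dots> dvd h * g12" using assms(6) by (simp add: h_def)
    finally have "g * g dvd g * (e * g12)" by (simp add: he mult.assoc)
    hence "g dvd e * g12" using gnz by simp
    thus ?thesis using cop by (simp add: coprime_dvd_mult_right_iff)
  qed
  define G where "G = reflect_poly g"
  have rh: "reflect_poly h = - h"
    using rv_self[of h] rv_xm1[OF m, where 'a='a] dh by (simp add: h_def)
  define u where "u = - reflect_poly e"
  have hu: "xm1 m = u * G"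
  proof -
    have "reflect_poly h = G * reflect_poly e" by (simp add: he G_def reflect_poly_mult)
    hence "G * reflect_poly e = - h" using rh by simp
    hence "h = - (G * reflect_poly e)" by (simp add: minus_equation_iff)
    thus ?thesis by (simp add: u_def h_def mult.commute)
  qed
  have unz: "u \<noteq> 0" using hu hnz by (auto simp: h_def)
  have orthC: "\<forall>c\<in>qc_code m g11 g12 g22. euclid_ip m c ((u*s1) mod h, (u*s2) mod h) = 0" for s1 s2
  proof
    fix c assume "c \<in> qc_code m g11 g12 g22"
    then obtain r1 r2 where c: "c = ((r1 * g11) mod xm1 m, (r1 * g12 + r2 * g22) mod xm1 m)"
      by (auto simp: qc_code_def)
    have d1: "g dvd r1 * g11" by (simp add: g_def)
    have d2: "g dvd r1 * g12 + r2 * g22" using g12 by (simp add: g_def)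
    have "Bf m ((u*s1) mod xm1 m) ((r1 * g11) mod xm1 m) = 0"
      by (rule orth[OF m hu[unfolded G_def] d1])
    moreover have "Bf m ((u*s2) mod xm1 m) ((r1 * g12 + r2 * g22) mod xm1 m) = 0"
      by (rule orth[OF m hu[unfolded G_def] d2])
    moreover have "euclid_ip m c x = Bf m (fst x) (fst c) + Bf m (snd x) (snd c)" for x
      by (simp add: euclid_ip_def Bf_def mult.commute)
    ultimately show "euclid_ip m c ((u*s1) mod h, (u*s2) mod h) = 0"
      by (simp add: c h_def)
  qed
  have zero: "(u*s1) mod h = 0 \<and> (u*s2) mod h = 0"
    if inC: "((u*s1) mod h, (u*s2) mod h) \<in> qc_code m g11 g12 g22" for s1 s2
  proof -
    have "((u*s1) mod h, (u*s2) mod h) \<in> R2 m"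
      using degree_mod_xm1[OF m, where 'a='a] by (simp add: R2_def h_def)
    hence "((u*s1) mod h, (u*s2) mod h) \<in> euclid_dual m (qc_code m g11 g12 g22)"
      using orthC by (simp add: euclid_dual_def)
    hence "((u*s1) mod h, (u*s2) mod h) \<in> {(0,0)}" using inC assms(7) by (auto simp: euclid_LCD_def)
    thus ?thesis by simp
  qed
  have "((u*g11) mod h, (u*g12) mod h) \<in> qc_code m g11 g12 g22"
    unfolding qc_code_def h_def by (rule CollectI, rule exI[of _ u], rule exI[of _ 0]) simp
  hence "(u*g11) mod h = 0" using zero by blast
  hence "h dvd u * g11" by (simp add: dvd_eq_mod_eq_0)
  hence "u * G dvd u * g11" using hu unfolding h_def by metis
  hence G1: "G dvd g11" using unz by (metis dvd_times_left_cancel_iff)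
  have "((u*0) mod h, (u*g22) mod h) \<in> qc_code m g11 g12 g22"
    unfolding qc_code_def h_def by (rule CollectI, rule exI[of _ 0], rule exI[of _ u]) simp
  hence "(u*g22) mod h = 0" using zero by blast
  hence "h dvd u * g22" by (simp add: dvd_eq_mod_eq_0)
  hence "u * G dvd u * g22" using hu unfolding h_def by metis
  hence G2: "G dvd g22" using unz by (metis dvd_times_left_cancel_iff)
  have Gg: "G dvd g" using G1 G2 by (simp add: g_def)
  have c0: "coeff g 0 \<noteq> 0"
  proof
    assume "coeff g 0 = 0"
    hence "coeff h 0 = 0" by (simp add: he coeff_mult_0)
    thus False using m by (simp add: h_def coeff_xm1)
  qed
  have dG: "degree G = degree g" using c0 by (simp add: G_def)
  obtain k where gk: "g = G * k" using Gg by (auto elim: dvdE)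
  have "G \<noteq> 0" "k \<noteq> 0" using gk gnz by auto
  hence "degree k = 0" using gk dG by (metis add_cancel_right_right degree_mult_eq)
  hence kc: "k = [:coeff k 0:]" by (metis degree_0_id)
  have ck: "coeff k 0 \<noteq> 0" using \<open>k \<noteq> 0\<close> kc by (metis pCons_0_0)
  have "g = G * [:coeff k 0:]" using gk kc by metis
  hence "g = smult (coeff k 0) G" by simp
  hence "smult (inverse (coeff k 0)) g = smult (inverse (coeff k 0) * coeff k 0) G" by simp
  hence "reflect_poly g = smult (inverse (coeff k 0)) g" using ck by (simp add: G_def)
  thus ?thesis using gnz by (auto simp: self_reciprocal_def g_def)
qed
end
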